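(* Let $\{(\iota_1,z_1^* ),\dots,(\iota_J,z_J^* )\}$ be minimally degenerate. Then: (1) $\ker A^*$ is one-dimensional and there is a unique $\vec{\mathfrak c}\in(0,\infty)^J$ with $|\vec{\mathfrak c}|=1$ and $\ker A^*=\mathbb{R}\vec{\mathfrak c}$; (2) $\big|\frac{\vec\ell}{|\vec\ell|}-\vec{\mathfrak c}\big|\simeq\frac{|A^*\vec\ell|}{|\vec\ell|}$ for every $0\ne\vec\ell\in[0,\infty)^J$; (3) for any $\delta_1>0$ and $\vec\lambda\in(0,\infty)^J$ with $\lambda_{\mathrm{max2}}\ge\delta_1\lambda_{\max}$, $\sum_{i=1}^J\lambda_i^{2D-2}(A^*\vec\lambda^D)_i^2\simeq_{\delta_1}\lambda_{\max}^{2D-2}|A^*\vec\lambda^D|^2$.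
   Context: $N\ge7$, $D=\frac{N-2}2$; $\iota_i\in\{\pm1\}$ and distinct $z_i^*\in\mathbb{R}^N$. $A^*_{ij}=\mathbf 1_{i\ne j}\kappa_0\kappa_\infty\frac{\iota_i\iota_j}{|z_i^*-z_j^*|^{N-2}}$ with fixed positive constants $\kappa_0,\kappa_\infty$. A configuration is degenerate if $A^*$ has a nonzero kernel element in $[0,\infty)^J$; minimally degenerate if it is degenerate while every proper sub-configuration of size $\ge2$ (using the corresponding submatrix) is non-degenerate. $\vec\lambda^D=(\lambda_i^D)_i$; $\lambda_{\max}$, $\lambda_{\mathrm{max2}}$ largest and second largest $\lambda_i$. Implicit constants depend on the configuration (and $\delta_1$ where indicated). *)

theory Defs
  imports "HOL-Analysis.Analysis"
begin

text \<open>Bubbles are indexed by a finite type 'j (so J = CARD('j)); points z_i live in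
  real^'n with N = CARD('n).\<close>

definition Astar :: "real \<Rightarrow> real \<Rightarrow> ('j::finite \<Rightarrow> real) \<Rightarrow> ('j \<Rightarrow> real^'n::finite)
    \<Rightarrow> real^'j^'j" where
  "Astar k0 kinf iota z = (\<chi> i j. if i = j then 0
      else k0 * kinf * iota i * iota j / (dist (z i) (z j)) ^ (CARD('n) - 2))"

text \<open>Degeneracy of the sub-configuration indexed by S (using the submatrix of A on S):
  the submatrix has a nonzero kernel element with nonnegative entries.\<close>
definition sub_degenerate :: "real^'j^'j \<Rightarrow> 'j::finite set \<Rightarrow> bool" where
  "sub_degenerate A S \<longleftrightarrow> (\<exists>c :: 'j \<Rightarrow> real. (\<forall>i\<in>S. c i \<ge> 0) \<and> (\<exists>i\<in>S. c i \<noteq> 0)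
      \<and> (\<forall>i\<in>S. (\<Sum>j\<in>S. A $ i $ j * c j) = 0))"

definition degenerate :: "real^'j^'j \<Rightarrow> bool" where
  "degenerate A \<longleftrightarrow> (\<exists>c :: real^'j::finite. c \<noteq> 0 \<and> (\<forall>i. c $ i \<ge> 0) \<and> A *v c = 0)"

definition minimally_degenerate :: "real^'j^'j \<Rightarrow> bool" where
  "minimally_degenerate A \<longleftrightarrow> degenerate A \<and>
     (\<forall>S :: 'j::finite set. S \<subset> UNIV \<and> card S \<ge> 2 \<longrightarrow> \<not> sub_degenerate A S)"

definition lmax :: "real^'j::finite \<Rightarrow> real" where
  "lmax l = Max (range (\<lambda>i. l $ i))"

text \<open>Second largest entry (counted with multiplicity): the largest entry after
  removing one index at which the maximum is attained.\<close>
definition lmax2 :: "real^'j::finite \<Rightarrow> real" where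
  "lmax2 l = Max ((\<lambda>i. l $ i) ` (UNIV - {SOME i. l $ i = lmax l}))"

definition vpowr :: "real^'j::finite \<Rightarrow> real \<Rightarrow> real^'j" where
  "vpowr l D = (\<chi> i. (l $ i) powr D)"

end

theory Submission
  imports Defs
begin

lemma closed_Collect_ex_finite:
  assumes "\<And>i::'a::finite. closed {x. P i x}"
  shows "closed {x. \<exists>i. P i x}"
proof -
  have "{x. \<exists>i. P i x} = (\<Union>i\<in>UNIV. {x. P i x})" by auto
  then show ?thesis using assms by (metis closed_UN finite)
qed

lemma pos_kernel:
  fixes A :: "real^'j::finite^'j"
  assumes offdiag: "\<And>i k. i \<noteq> k \<Longrightarrow> A$i$k \<noteq> 0"
    and md: "minimally_degenerate A"
    and vnn: "\<forall>i. v$i \<ge> 0" and vnz: "v \<noteq> 0" and Av: "A *v v = 0"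
  shows "v$i > 0"
proof (rule ccontr)
  assume "\<not> v$i > 0"
  define S where "S = {k. v$k > 0}"
  have iS: "i \<notin> S" using \<open>\<not> v$i > 0\<close> S_def by auto
  have zero: "\<And>k. k \<notin> S \<Longrightarrow> v$k = 0" using vnn S_def by (metis less_eq_real_def mem_Collect_eq)
  obtain k where "v$k \<noteq> 0" using vnz by (auto simp: vec_eq_iff)
  then have kS: "k \<in> S" using zero by blast
  have Av_i: "\<And>i. (\<Sum>j\<in>UNIV. A$i$j * v$j) = 0" using Av
    unfolding matrix_vector_mult_def vec_eq_iff by simp
  have sumS: "\<And>i. (\<Sum>j\<in>S. A$i$j * v$j) = (\<Sum>j\<in>UNIV. A$i$j * v$j)"
    by (rule sum.mono_neutral_left) (auto simp: zero)
  show False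
  proof (cases "S = {k}")
    case True
    have "A$i$k * v$k = 0" using Av_i[of i] sumS[of i] True by simp
    moreover have "i \<noteq> k" using iS kS by auto
    ultimately show False using offdiag \<open>v$k \<noteq> 0\<close> by simp
  next
    case False
    then obtain k' where "k' \<in> S" "k' \<noteq> k" using kS by auto
    then have "card S \<ge> 2"
      proof -
      have "{k, k'} \<subseteq> S" using kS \<open>k' \<in> S\<close> by auto
      then have "card {k, k'} \<le> card S" by (intro card_mono) auto
      then show ?thesis using \<open>k' \<noteq> k\<close> by simp
    qed
    moreover have "S \<subset> UNIV" using iS by auto
    moreover have "sub_degenerate A S"
      unfolding sub_degenerate_def
      by (rule exI[of _ "\<lambda>j. v$j"]) (use vnn kS \<open>v$k \<noteq> 0\<close> sumS Av_i in auto)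
    ultimately show False using md unfolding minimally_degenerate_def by blast
  qed
qed

lemma kernel_line:
  fixes A :: "real^'j::finite^'j"
  assumes offdiag: "\<And>i k. i \<noteq> k \<Longrightarrow> A$i$k \<noteq> 0"
    and md: "minimally_degenerate A"
    and cpos: "\<forall>i. c$i > 0" and Ac: "A *v c = 0" and Aw: "A *v w = 0"
  shows "\<exists>t. w = t *\<^sub>R c"
proof -
  define t where "t = Min (range (\<lambda>j. w$j / c$j))"
  have tle: "\<And>j. t \<le> w$j / c$j" unfolding t_def by (intro Min_le) auto
  have "t \<in> range (\<lambda>j. w$j / c$j)" unfolding t_def by (rule Min_in) auto
  then obtain k where k: "t = w$k / c$k" by auto
  define u where "u = w - t *\<^sub>R c"
  have unn: "\<forall>j. u$j \<ge> 0"
  proof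
    fix j
    have "t * c$j \<le> w$j" using tle[of j] cpos by (simp add: pos_le_divide_eq)
    then show "u$j \<ge> 0" unfolding u_def by simp
  qed
  have uk: "u$k = 0" unfolding u_def k using cpos by (simp add: less_imp_neq[symmetric])
  have Au: "A *v u = 0" unfolding u_def by (simp add: algebra_simps Ac Aw)
  have "u = 0"
  proof (rule ccontr)
    assume "u \<noteq> 0"
    from pos_kernel[OF offdiag md unn this Au, of k] uk show False by simp
  qed
  then show ?thesis unfolding u_def by auto
qed

lemma cont_Av: "continuous_on S (\<lambda>w. (A::real^'j::finite^'k::finite) *v w)"
  by (rule linear_continuous_on[OF matrix_vector_mul_bounded_linear])

lemma coercive_perp:
  fixes A :: "real^'j::finite^'j"
  assumes ker: "{v. A *v v = 0} = range (\<lambda>t. t *\<^sub>R c)" and cnz: "c \<noteq> 0"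
  shows "\<exists>\<sigma>>0. \<forall>w. w \<bullet> c = 0 \<longrightarrow> \<sigma> * norm w \<le> norm (A *v w)"
proof -
  define T where "T = sphere (0::real^'j) 1 \<inter> {w. w \<bullet> c = 0}"
  have inT: "w /\<^sub>R norm w \<in> T" if "w \<bullet> c = 0" "w \<noteq> 0" for w
    using that unfolding T_def by auto
  show ?thesis
  proof (cases "T = {}")
    case True
    have "w = 0" if "w \<bullet> c = 0" for w using inT[OF that] True by blast
    then show ?thesis by (intro exI[of _ "1::real"]) (metis order_refl mult_1 norm_zero matrix_vector_mult_0_right zero_less_one)
  next
    case False
    have "compact T" unfolding T_def
      by (intro compact_Int_closed compact_sphere closed_Collect_eq continuous_intros)
    moreover have "continuous_on T (\<lambda>w. norm (A *v w))"
      by (intro continuous_on_norm cont_Av)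
    ultimately obtain w0 where w0: "w0 \<in> T" and min: "\<forall>y\<in>T. norm (A *v w0) \<le> norm (A *v y)"
      using continuous_attains_inf[OF _ False] by blast
    have "A *v w0 \<noteq> 0"
    proof
      assume "A *v w0 = 0"
      then obtain t where t: "w0 = t *\<^sub>R c" using ker by blast
      have "w0 \<bullet> c = 0" using w0 T_def by auto
      then have "t * (c \<bullet> c) = 0" using t by simp
      then have "t = 0" using cnz by simp
      then show False using t w0 T_def by simp
    qed
    then have pos: "norm (A *v w0) > 0" by simp
    show ?thesis
    proof (intro exI[of _ "norm (A *v w0)"] conjI pos allI impI)
      fix w :: "real^'j" assume wc: "w \<bullet> c = 0"
      show "norm (A *v w0) * norm w \<le> norm (A *v w)"
      proof (cases "w = 0")
        case False
        have "norm (A *v w0) \<le> norm (A *v (w /\<^sub>R norm w))" using min inT[OF wc False] by blast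
        also have "\<dots> = norm (A *v w) / norm w"
          by (simp add: matrix_vector_mult_scaleR divide_inverse_commute)
        finally show ?thesis using False by (simp add: pos_le_divide_eq)
      qed simp
    qed
  qed
qed

lemma part2:
  fixes A :: "real^'j::finite^'j"
  assumes cpos: "\<forall>i. c$i > 0" and cn: "norm c = 1" and ker: "{v. A *v v = 0} = range (\<lambda>t. t *\<^sub>R c)"
  shows "\<exists>C1 C2. C1 > 0 \<and> C2 > 0 \<and>
          (\<forall>l :: real^'j. l \<noteq> 0 \<and> (\<forall>i. l $ i \<ge> 0) \<longrightarrow>
             C1 * (norm (A *v l) / norm l) \<le> norm (l /\<^sub>R norm l - c)
           \<and> norm (l /\<^sub>R norm l - c) \<le> C2 * (norm (A *v l) / norm l))"
proof -
  have cnz: "c \<noteq> 0" using cn by auto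
  obtain \<sigma> where sp: "\<sigma> > 0" and sig: "\<And>w. w \<bullet> c = 0 \<Longrightarrow> \<sigma> * norm w \<le> norm (A *v w)"
    using coercive_perp[OF ker cnz] by blast
  obtain B where Bp: "B > 0" and Bb: "\<And>x. norm (A *v x) \<le> norm x * B"
    using bounded_linear.pos_bounded[OF matrix_vector_mul_bounded_linear[of A]] by blast
  have "c \<in> range (\<lambda>t. t *\<^sub>R c)" by (metis rangeI scaleR_one)
  then have Ac: "A *v c = 0" using ker by blast
  show ?thesis
  proof (rule exI[of _ "1/B"], rule exI[of _ "2/\<sigma>"], intro conjI allI impI)
    fix l :: "real^'j" assume l: "l \<noteq> 0 \<and> (\<forall>i. l $ i \<ge> 0)"
    define u where "u = l /\<^sub>R norm l"
    have nl: "norm l > 0" using l by simp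
    have Au: "A *v (u - c) = A *v u" by (simp add: algebra_simps Ac)
    have Aul: "norm (A *v u) = norm (A *v l) / norm l"
      unfolding u_def by (simp add: matrix_vector_mult_scaleR divide_inverse_commute)
    have "norm (A *v l) / norm l \<le> norm (u - c) * B" using Bb[of "u - c"] Au Aul by simp
    then have "1 / B * (norm (A *v l) / norm l) \<le> 1 / B * (norm (u - c) * B)"
      using Bp by (intro mult_left_mono) auto
    also have "\<dots> = norm (u - c)" using Bp by simp
    finally show "1 / B * (norm (A *v l) / norm l) \<le> norm (l /\<^sub>R norm l - c)"
      unfolding u_def .
    define s where "s = u \<bullet> c"
    have un: "norm u = 1" unfolding u_def using nl by simp
    have s0: "s \<ge> 0" unfolding s_def inner_vec_def u_def
      using l cpos by (intro sum_nonneg) (simp add: less_imp_le)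
    have s1: "s \<le> 1" unfolding s_def using norm_cauchy_schwarz[of u c] un cn by simp
    define w where "w = u - s *\<^sub>R c"
    have wc: "w \<bullet> c = 0" unfolding w_def s_def using cn by (simp add: inner_diff_left dot_square_norm)
    have Aw: "A *v w = A *v u" unfolding w_def by (simp add: algebra_simps Ac)
    have uu: "u \<bullet> u = 1" using un by (simp add: dot_square_norm)
    have cc: "c \<bullet> c = 1" using cn by (simp add: dot_square_norm)
    have e1: "(norm (u - c))\<^sup>2 = 2 - 2 * s"
      unfolding power2_norm_eq_inner s_def using uu cc
      by (simp add: inner_diff_left inner_diff_right inner_commute)
    have e2: "(norm w)\<^sup>2 = 1 - s\<^sup>2"
      unfolding power2_norm_eq_inner s_def w_def using uu cc
      by (simp add: inner_diff_left inner_diff_right inner_commute power2_eq_square algebra_simps)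
    have "(norm (u - c))\<^sup>2 \<le> (2 * norm w)\<^sup>2" using e1 e2 s0 s1
      by (simp add: power2_eq_square) (smt (verit) mult_left_le_one_le)
    then have "norm (u - c) \<le> 2 * norm w" by (rule power2_le_imp_le) simp
    also have "\<dots> \<le> 2 / \<sigma> * norm (A *v w)" using sig[OF wc] sp by (simp add: field_simps)
    finally show "norm (l /\<^sub>R norm l - c) \<le> 2 / \<sigma> * (norm (A *v l) / norm l)"
      using Aw Aul unfolding u_def by simp
  qed (use Bp sp in auto)
qed

lemma part1:
  fixes A :: "real^'j::finite^'j"
  assumes offdiag: "\<And>i k. i \<noteq> k \<Longrightarrow> A$i$k \<noteq> 0"
    and md: "minimally_degenerate A"
  shows "\<exists>c. (\<forall>i. c$i > 0) \<and> norm c = 1 \<and> {v. A *v v = 0} = range (\<lambda>t. t *\<^sub>R c)"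
proof -
  obtain c0 :: "real^'j" where c0: "c0 \<noteq> 0" "\<forall>i. c0 $ i \<ge> 0" "A *v c0 = 0"
    using md unfolding minimally_degenerate_def degenerate_def by blast
  have c0p: "\<And>i. c0$i > 0" using pos_kernel[OF offdiag md c0(2) c0(1) c0(3)] .
  define c where "c = c0 /\<^sub>R norm c0"
  have n0: "norm c0 > 0" using c0 by simp
  have cp: "\<forall>i. c$i > 0" unfolding c_def using c0p n0 by simp
  have cn: "norm c = 1" unfolding c_def using n0 by simp
  have Ac: "A *v c = 0" unfolding c_def by (simp add: matrix_vector_mult_scaleR c0)
  have "{v. A *v v = 0} = range (\<lambda>t. t *\<^sub>R c)"
  proof
    show "{v. A *v v = 0} \<subseteq> range (\<lambda>t. t *\<^sub>R c)"
      using kernel_line[OF offdiag md cp Ac] by blast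
    show "range (\<lambda>t. t *\<^sub>R c) \<subseteq> {v. A *v v = 0}"
      by (auto simp: matrix_vector_mult_scaleR Ac)
  qed
  then show ?thesis using cp cn by blast
qed

lemma dim_line: "(c::real^'j::finite) \<noteq> 0 \<Longrightarrow> dim (range (\<lambda>t. t *\<^sub>R c)) = 1"
proof -
  assume "c \<noteq> 0"
  have "range (\<lambda>t. t *\<^sub>R c) = span {c}" by (simp add: span_singleton)
  then show ?thesis using \<open>c \<noteq> 0\<close> by simp
qed

lemma uniq_c:
  fixes A :: "real^'j::finite^'j"
  assumes "(\<forall>i. c$i > 0) \<and> norm c = 1 \<and> {v. A *v v = 0} = range (\<lambda>t. t *\<^sub>R c)"
    and "(\<forall>i. c'$i > 0) \<and> norm c' = 1 \<and> {v. A *v v = 0} = range (\<lambda>t. t *\<^sub>R c')"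
  shows "c' = c"
proof -
  have "c' \<in> range (\<lambda>t. t *\<^sub>R c')" by (metis rangeI scaleR_one)
  then obtain t where t: "c' = t *\<^sub>R c" using assms by auto
  have "c'$undefined = t * c$undefined" using t by simp
  then have "t > 0" using assms by (metis zero_less_mult_pos2)
  have "norm c' = \<bar>t\<bar> * norm c" using t by simp
  then have "t = 1" using assms \<open>t > 0\<close> by simp
  then show ?thesis using t by simp
qed

lemma cont_vpowr:
  assumes "D > 0"
  shows "continuous_on {l. \<forall>k. 0 \<le> l$k} (\<lambda>l::real^'j::finite. vpowr l D)"
  unfolding vpowr_def
  by (intro continuous_on_vec_lambda continuous_on_powr' continuous_on_component continuous_on_id continuous_on_const)
     (use assms in auto)

lemma part3_norm:
  fixes A :: "real^'j::finite^'j" and p D \<delta>1 :: real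
  assumes md: "minimally_degenerate A"
    and cpos: "\<forall>i. c$i > 0" and cn: "norm c = 1" and ker: "{v. A *v v = 0} = range (\<lambda>t. t *\<^sub>R c)"
    and pp: "p > 0" and Dp: "D > 0" and dp: "\<delta>1 > 0"
  shows "\<exists>C1>0. \<forall>l. (\<forall>k. 0 \<le> l$k) \<and> (\<forall>k. l$k \<le> 1) \<and> (\<exists>i. l$i = 1 \<and> (\<exists>j. j \<noteq> i \<and> \<delta>1 \<le> l$j)) \<longrightarrow>
     C1 * (norm (A *v vpowr l D))\<^sup>2 \<le> (\<Sum>k\<in>UNIV. (l$k) powr p * ((A *v vpowr l D)$k)\<^sup>2)"
proof -
  define F where "F = (\<lambda>l::real^'j. \<Sum>k\<in>UNIV. (l$k) powr p * ((A *v vpowr l D)$k)\<^sup>2)"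
  define G where "G = (\<lambda>l::real^'j. (norm (A *v vpowr l D))\<^sup>2)"
  define m where "m = Min (range (\<lambda>k. c$k))"
  have mle: "\<And>k. m \<le> c$k" unfolding m_def by (intro Min_le) auto
  have "m \<in> range (\<lambda>k. c$k)" unfolding m_def by (rule Min_in) auto
  then have mp: "m > 0" using cpos by auto
  define e where "e = (m/2) powr (1/D)"
  have ep: "e > 0" unfolding e_def using mp by simp
  have eD: "e powr D = m/2" unfolding e_def using mp Dp by (simp add: powr_powr)
  define K where "K = {l::real^'j. (\<forall>k. 0 \<le> l$k) \<and> (\<forall>k. l$k \<le> 1) \<and> (\<exists>i. l$i = 1 \<and> (\<exists>j. j \<noteq> i \<and> \<delta>1 \<le> l$j)) \<and> (\<exists>k. l$k \<le> e)}"
  have Fnn: "F l \<ge> 0" for l unfolding F_def by (intro sum_nonneg mult_nonneg_nonneg) auto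
  have Gnn: "G l \<ge> 0" for l unfolding G_def by simp
  have Fpos: "F l > 0" if lK: "l \<in> K" for l
  proof (rule ccontr)
    assume "\<not> F l > 0"
    then have F0: "F l = 0" using Fnn[of l] by simp
    define v where "v = vpowr l D"
    from lK obtain i j k where li: "l$i = 1" and ji: "j \<noteq> i" and lj: "\<delta>1 \<le> l$j" and lk: "l$k \<le> e"
      and lnn: "\<forall>k. 0 \<le> l$k" unfolding K_def by blast
    have terms: "(l$s) powr p * ((A *v v)$s)\<^sup>2 = 0" for s
      using F0 unfolding F_def v_def
      by (subst (asm) sum_nonneg_eq_0_iff) (auto intro!: mult_nonneg_nonneg)
    define S where "S = {s. l$s > 0}"
    have AvS: "(A *v v)$s = 0" if "s \<in> S" for s using terms[of s] that S_def by simp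
    have vS: "v$s = 0" if "s \<notin> S" for s
    proof -
      have "l$s = 0" using that lnn S_def by (metis less_eq_real_def mem_Collect_eq)
      then show ?thesis unfolding v_def vpowr_def by simp
    qed
    have vnn: "v$s \<ge> 0" for s unfolding v_def vpowr_def by simp
    have vi: "v$i = 1" unfolding v_def vpowr_def using li by simp
    have Av_i: "(\<Sum>t\<in>UNIV. A$s$t * v$t) = (A *v v)$s" for s
      by (simp add: matrix_vector_mult_def)
    have sumS: "(\<Sum>t\<in>S. A$s$t * v$t) = (\<Sum>t\<in>UNIV. A$s$t * v$t)" for s
      by (rule sum.mono_neutral_left) (auto simp: vS)
    show False
    proof (cases "S = UNIV")
      case True
      then have "A *v v = 0" using AvS by (simp add: vec_eq_iff)
      then obtain t where t: "v = t *\<^sub>R c" using ker by auto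
      have "t * c$i = 1" using vi t by simp
      moreover have "c$i \<le> 1" using component_le_norm_cart[of c i] cn by simp
      moreover have ci: "c$i > 0" using cpos by blast
      ultimately have "t = 1 / c$i" by (simp add: eq_divide_eq)
      then have "t \<ge> 1" using ci \<open>c$i \<le> 1\<close> by (simp add: le_divide_eq)
      then have "v$k \<ge> c$k" using t cpos by (simp add: less_imp_le)
      then have "v$k \<ge> m" using mle[of k] by simp
      moreover have "v$k \<le> e powr D" unfolding v_def vpowr_def using lk lnn Dp
        by (simp add: powr_mono2)
      ultimately show False using eD mp by simp
    next
      case False
      have iS: "i \<in> S" and jS: "j \<in> S" using li lj dp S_def by auto
      have "card {i, j} \<le> card S" using iS jS by (intro card_mono) auto
      then have "card S \<ge> 2" using ji by simp
      moreover have "S \<subset> UNIV" using False by auto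
      moreover have "sub_degenerate A S"
        unfolding sub_degenerate_def
        using vnn iS vi sumS Av_i AvS by (intro exI[of _ "\<lambda>t. v$t"] conjI bexI[of _ i]) auto
      ultimately show False using md unfolding minimally_degenerate_def by blast
    qed
  qed
  obtain f0 M where f0p: "f0 > 0" and M0: "M \<ge> 0" and f0le: "\<forall>l\<in>K. f0 \<le> F l" and GM: "\<forall>l\<in>K. G l \<le> M"
  proof (cases "K = {}")
    case True
    then show ?thesis using that[of 1 0] by auto
  next
    case False
    have bK: "bounded K"
    proof -
      have "norm l \<le> real CARD('j)" if "l \<in> K" for l
      proof -
        have "norm l \<le> (\<Sum>i\<in>UNIV. \<bar>l$i\<bar>)" by (rule norm_le_l1_cart)
        also have "\<dots> \<le> (\<Sum>i\<in>(UNIV::'j set). 1)" using that unfolding K_def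
          by (intro sum_mono) auto
        finally show ?thesis by simp
      qed
      then show ?thesis unfolding bounded_iff by blast
    qed
    have cK: "closed K" unfolding K_def
      by (intro closed_Collect_conj closed_Collect_all closed_Collect_ex_finite closed_Collect_le
          closed_Collect_eq closed_Collect_const continuous_on_component continuous_on_id continuous_on_const)
    have compK: "compact K" using bK cK by (simp add: compact_eq_bounded_closed)
    have KP: "K \<subseteq> {l. \<forall>k. 0 \<le> l$k}" unfolding K_def by auto
    have cv: "continuous_on K (\<lambda>l. vpowr l D)" using cont_vpowr[OF Dp] KP continuous_on_subset by blast
    have cAv: "continuous_on K (\<lambda>l. A *v vpowr l D)"
      using continuous_on_compose2[OF cont_Av cv, of UNIV] by auto
    have cF: "continuous_on K F" unfolding F_def
      apply (intro continuous_on_sum continuous_on_mult continuous_on_power continuous_on_component cAv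
          continuous_on_powr' continuous_on_id continuous_on_const)
      using KP pp by auto
    have cG: "continuous_on K G" unfolding G_def
      by (intro continuous_on_power continuous_on_norm cAv)
    obtain l1 where "l1 \<in> K" "\<forall>y\<in>K. F l1 \<le> F y" using continuous_attains_inf[OF compK False cF] by blast
    moreover obtain l2 where "l2 \<in> K" "\<forall>y\<in>K. G y \<le> G l2" using continuous_attains_sup[OF compK False cG] by blast
    ultimately show ?thesis using that[of "F l1" "G l2"] Fpos Gnn by blast
  qed
  define C1 where "C1 = min (e powr p) (f0 / (M + 1))"
  have C1p: "C1 > 0" unfolding C1_def using ep f0p M0 by simp
  show ?thesis
  proof (intro exI[of _ C1] conjI C1p allI impI)
    fix l :: "real^'j"
    assume l: "(\<forall>k. 0 \<le> l$k) \<and> (\<forall>k. l$k \<le> 1) \<and> (\<exists>i. l$i = 1 \<and> (\<exists>j. j \<noteq> i \<and> \<delta>1 \<le> l$j))"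
    show "C1 * (norm (A *v vpowr l D))\<^sup>2 \<le> (\<Sum>k\<in>UNIV. (l$k) powr p * ((A *v vpowr l D)$k)\<^sup>2)"
    proof (cases "\<exists>k. l$k \<le> e")
      case True
      then have lK: "l \<in> K" using l unfolding K_def by blast
      have "C1 * G l \<le> f0 / (M + 1) * G l" unfolding C1_def using Gnn[of l] by (intro mult_right_mono) auto
      also have "\<dots> \<le> f0 / (M + 1) * (M + 1)" using GM lK f0p M0
        by (intro mult_left_mono) (auto simp: less_imp_le)
      also have "\<dots> = f0" using M0 by simp
      also have "\<dots> \<le> F l" using f0le lK by blast
      finally show ?thesis unfolding F_def G_def .
    next
      case False
      then have lk: "\<And>k. e < l$k" by (simp add: not_le)
      have "G l = (\<Sum>k\<in>UNIV. ((A *v vpowr l D)$k)\<^sup>2)" unfolding G_def power2_norm_eq_inner inner_vec_def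
        by (simp add: power2_eq_square)
      then have "C1 * G l \<le> (\<Sum>k\<in>UNIV. e powr p * ((A *v vpowr l D)$k)\<^sup>2)"
        unfolding C1_def by (simp add: sum_distrib_left[symmetric]) (intro mult_right_mono; simp add: sum_nonneg)
      also have "\<dots> \<le> F l" unfolding F_def
        using lk ep pp by (intro sum_mono mult_right_mono powr_mono2) (auto simp: less_imp_le)
      finally show ?thesis unfolding F_def G_def .
    qed
  qed
qed

lemma scale_vpowr:
  fixes l' :: "real^'j::finite" and L :: real
  assumes "L > 0" "\<forall>k. l'$k \<ge> 0"
  shows "vpowr (L *\<^sub>R l') D = (L powr D) *\<^sub>R vpowr l' D"
  using assms unfolding vpowr_def by (simp add: vec_eq_iff powr_mult)

lemma upper3:
  fixes A :: "real^'j::finite^'j" and l :: "real^'j"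
  assumes "\<forall>k. l$k > 0" "p \<ge> 0"
  shows "(\<Sum>i\<in>UNIV. (l $ i) powr p * ((A *v x) $ i)\<^sup>2) \<le> 1 * (lmax l powr p * (norm (A *v x))\<^sup>2)"
proof -
  have le: "l$i \<le> lmax l" for i unfolding lmax_def by (intro Max_ge) auto
  have "(\<Sum>i\<in>UNIV. (l $ i) powr p * ((A *v x) $ i)\<^sup>2) \<le> (\<Sum>i\<in>UNIV. lmax l powr p * ((A *v x) $ i)\<^sup>2)"
    using assms le by (intro sum_mono mult_right_mono powr_mono2) (auto simp: less_imp_le)
  also have "\<dots> = lmax l powr p * (norm (A *v x))\<^sup>2"
    unfolding power2_norm_eq_inner inner_vec_def by (simp add: sum_distrib_left power2_eq_square)
  finally show ?thesis by simp
qed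

theorem lemma4p5:
  fixes k0 kinf :: real
    and iota :: "'j::finite \<Rightarrow> real"
    and z :: "'j \<Rightarrow> real^'n::finite"
  defines "A \<equiv> Astar k0 kinf iota z"
    and "D \<equiv> (real CARD('n) - 2) / 2"
  assumes N7: "CARD('n) \<ge> 7"
    and k0: "k0 > 0" and kinf: "kinf > 0"
    and iota: "\<And>i. iota i \<in> {-1, 1}"
    and distinct: "inj z"
    and mindeg: "minimally_degenerate A"
  shows "dim {v :: real^'j. A *v v = 0} = 1
    \<and> (\<exists>!c :: real^'j. (\<forall>i. c $ i > 0) \<and> norm c = 1
          \<and> {v. A *v v = 0} = range (\<lambda>t. t *\<^sub>R c))
    \<and> (\<forall>c :: real^'j. ((\<forall>i. c $ i > 0) \<and> norm c = 1
          \<and> {v. A *v v = 0} = range (\<lambda>t. t *\<^sub>R c)) \<longrightarrow>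
        (\<exists>C1 C2. C1 > 0 \<and> C2 > 0 \<and>
          (\<forall>l :: real^'j. l \<noteq> 0 \<and> (\<forall>i. l $ i \<ge> 0) \<longrightarrow>
             C1 * (norm (A *v l) / norm l) \<le> norm (l /\<^sub>R norm l - c)
           \<and> norm (l /\<^sub>R norm l - c) \<le> C2 * (norm (A *v l) / norm l))))
    \<and> (\<forall>\<delta>1 > 0. \<exists>C1 C2. C1 > 0 \<and> C2 > 0 \<and>
        (\<forall>l :: real^'j. (\<forall>i. l $ i > 0) \<and> lmax2 l \<ge> \<delta>1 * lmax l \<longrightarrow>
           C1 * (lmax l powr (2*D - 2) * (norm (A *v vpowr l D))\<^sup>2)
             \<le> (\<Sum>i\<in>UNIV. (l $ i) powr (2*D - 2) * ((A *v vpowr l D) $ i)\<^sup>2)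
         \<and> (\<Sum>i\<in>UNIV. (l $ i) powr (2*D - 2) * ((A *v vpowr l D) $ i)\<^sup>2)
             \<le> C2 * (lmax l powr (2*D - 2) * (norm (A *v vpowr l D))\<^sup>2)))"
proof -
  have offdiag: "A$i$k \<noteq> 0" if "i \<noteq> k" for i k
  proof -
    have "z i \<noteq> z k" using distinct that by (meson injD)
    then have "dist (z i) (z k) \<noteq> 0" by simp
    moreover have "iota i \<noteq> 0" "iota k \<noteq> 0" using iota[of i] iota[of k] by auto
    ultimately show ?thesis unfolding A_def Astar_def using that k0 kinf by simp
  qed
  obtain c where cp: "\<forall>i. c$i > 0" and cn: "norm c = 1" and ker: "{v. A *v v = 0} = range (\<lambda>t. t *\<^sub>R c)"
    using part1[OF offdiag mindeg] by blast
  have P1: "dim {v :: real^'j. A *v v = 0} = 1" proof -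
    have "c \<noteq> 0" using cn by auto
    from dim_line[OF this] show ?thesis unfolding ker .
  qed
  have P2: "\<exists>!c :: real^'j. (\<forall>i. c $ i > 0) \<and> norm c = 1
          \<and> {v. A *v v = 0} = range (\<lambda>t. t *\<^sub>R c)"
  proof (rule ex1I[of _ c])
    have h1: "(\<forall>i. c$i > 0) \<and> norm c = 1 \<and> {v. A *v v = 0} = range (\<lambda>t. t *\<^sub>R c)"
      using cp cn ker by blast
    show "(\<forall>i. c$i > 0) \<and> norm c = 1 \<and> {v. A *v v = 0} = range (\<lambda>t. t *\<^sub>R c)" using h1 .
    fix c' :: "real^'j"
    assume h2: "(\<forall>i. c'$i > 0) \<and> norm c' = 1 \<and> {v. A *v v = 0} = range (\<lambda>t. t *\<^sub>R c')"
    from uniq_c[OF h1 h2] show "c' = c" .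
  qed
  have P3: "\<forall>c :: real^'j. ((\<forall>i. c $ i > 0) \<and> norm c = 1
          \<and> {v. A *v v = 0} = range (\<lambda>t. t *\<^sub>R c)) \<longrightarrow>
        (\<exists>C1 C2. C1 > 0 \<and> C2 > 0 \<and>
          (\<forall>l :: real^'j. l \<noteq> 0 \<and> (\<forall>i. l $ i \<ge> 0) \<longrightarrow>
             C1 * (norm (A *v l) / norm l) \<le> norm (l /\<^sub>R norm l - c)
           \<and> norm (l /\<^sub>R norm l - c) \<le> C2 * (norm (A *v l) / norm l)))"
  proof (intro allI impI)
    fix c' :: "real^'j"
    assume h: "(\<forall>i. c'$i > 0) \<and> norm c' = 1 \<and> {v. A *v v = 0} = range (\<lambda>t. t *\<^sub>R c')"
    have a: "\<forall>i. c'$i > 0" using h by blast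
    have b: "norm c' = 1" using h by blast
    have d: "{v. A *v v = 0} = range (\<lambda>t. t *\<^sub>R c')" using h by blast
    show "\<exists>C1 C2. C1 > 0 \<and> C2 > 0 \<and>
          (\<forall>l :: real^'j. l \<noteq> 0 \<and> (\<forall>i. l $ i \<ge> 0) \<longrightarrow>
             C1 * (norm (A *v l) / norm l) \<le> norm (l /\<^sub>R norm l - c')
           \<and> norm (l /\<^sub>R norm l - c') \<le> C2 * (norm (A *v l) / norm l))"
      by (rule part2[OF a b d])
  qed
  define p where "p = 2*D - 2"
  have pp: "p > 0" and Dp: "D > 0" unfolding p_def D_def using N7 by auto
  have P4: "\<forall>\<delta>1 > 0. \<exists>C1 C2. C1 > 0 \<and> C2 > 0 \<and>
        (\<forall>l :: real^'j. (\<forall>i. l $ i > 0) \<and> lmax2 l \<ge> \<delta>1 * lmax l \<longrightarrow>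
           C1 * (lmax l powr (2*D - 2) * (norm (A *v vpowr l D))\<^sup>2)
             \<le> (\<Sum>i\<in>UNIV. (l $ i) powr (2*D - 2) * ((A *v vpowr l D) $ i)\<^sup>2)
         \<and> (\<Sum>i\<in>UNIV. (l $ i) powr (2*D - 2) * ((A *v vpowr l D) $ i)\<^sup>2)
             \<le> C2 * (lmax l powr (2*D - 2) * (norm (A *v vpowr l D))\<^sup>2))"
  proof (intro allI impI)
    fix \<delta>1 :: real assume dp: "\<delta>1 > 0"
    obtain C1 where C1both: "C1 > 0 \<and> (\<forall>l. (\<forall>k. 0 \<le> l$k) \<and> (\<forall>k. l$k \<le> 1) \<and> (\<exists>i. l$i = 1 \<and> (\<exists>j. j \<noteq> i \<and> \<delta>1 \<le> l$j)) \<longrightarrow>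
     C1 * (norm (A *v vpowr l D))\<^sup>2 \<le> (\<Sum>k\<in>UNIV. (l$k) powr p * ((A *v vpowr l D)$k)\<^sup>2))"
      by (rule exE[OF part3_norm[OF mindeg cp cn ker pp Dp dp]])
    have C1p: "C1 > 0" using C1both by (rule conjunct1)
    note C1 = C1both[THEN conjunct2, rule_format]
    show "\<exists>C1 C2. C1 > 0 \<and> C2 > 0 \<and>
        (\<forall>l :: real^'j. (\<forall>i. l $ i > 0) \<and> lmax2 l \<ge> \<delta>1 * lmax l \<longrightarrow>
           C1 * (lmax l powr (2*D - 2) * (norm (A *v vpowr l D))\<^sup>2)
             \<le> (\<Sum>i\<in>UNIV. (l $ i) powr (2*D - 2) * ((A *v vpowr l D) $ i)\<^sup>2)
         \<and> (\<Sum>i\<in>UNIV. (l $ i) powr (2*D - 2) * ((A *v vpowr l D) $ i)\<^sup>2)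
             \<le> C2 * (lmax l powr (2*D - 2) * (norm (A *v vpowr l D))\<^sup>2))"
    proof (rule exI[of _ C1], rule exI[of _ 1], intro conjI C1p zero_less_one allI impI)
      fix l :: "real^'j"
      assume l: "(\<forall>i. l $ i > 0) \<and> lmax2 l \<ge> \<delta>1 * lmax l"
      then have lpos: "\<forall>i. l $ i > 0" by blast
      show "(\<Sum>i\<in>UNIV. (l $ i) powr (2*D - 2) * ((A *v vpowr l D) $ i)\<^sup>2)
             \<le> 1 * (lmax l powr (2*D - 2) * (norm (A *v vpowr l D))\<^sup>2)"
        by (rule upper3[OF lpos]) (use pp p_def in simp)
      show "C1 * (lmax l powr (2*D - 2) * (norm (A *v vpowr l D))\<^sup>2)
             \<le> (\<Sum>i\<in>UNIV. (l $ i) powr (2*D - 2) * ((A *v vpowr l D) $ i)\<^sup>2)"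
      proof (cases "\<forall>i j::'j. i = j")
        case True
        then have "A *v x = 0" for x unfolding A_def Astar_def matrix_vector_mult_def
          by (simp add: vec_eq_iff)
        then show ?thesis by simp
      next
        case False
        define L where "L = lmax l"
        have "L \<in> range (\<lambda>i. l$i)" unfolding L_def lmax_def by (rule Max_in) auto
        then have "\<exists>i. l$i = lmax l" unfolding L_def by auto
        define i0 where "i0 = (SOME i. l$i = lmax l)"
        have li0: "l$i0 = L" unfolding i0_def L_def using someI_ex[OF \<open>\<exists>i. l$i = lmax l\<close>] .
        have Lp: "L > 0" using li0 lpos by metis
        have leL: "l$k \<le> L" for k unfolding L_def lmax_def by (intro Max_ge) auto
        obtain a b :: 'j where ab: "a \<noteq> b" using False by auto
        have ne: "UNIV - {i0} \<noteq> {}"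
        proof (cases "a = i0")
          case True
          then have "b \<in> UNIV - {i0}" using ab by simp
          then show ?thesis by (metis empty_iff)
        next
          case False
          then have "a \<in> UNIV - {i0}" by simp
          then show ?thesis by (metis empty_iff)
        qed
        have "lmax2 l \<in> (\<lambda>i. l$i) ` (UNIV - {i0})" unfolding lmax2_def i0_def[symmetric]
          using ne by (intro Max_in) auto
        then obtain j where ji: "j \<in> UNIV - {i0}" and lj: "lmax2 l = l$j" by (rule imageE)
        then have ji: "j \<noteq> i0" and lj: "l$j = lmax2 l" by auto
        define l' where "l' = (1/L) *\<^sub>R l"
        have ll': "l = L *\<^sub>R l'" unfolding l'_def using Lp by simp
        have l'nn: "\<forall>k. 0 \<le> l'$k" unfolding l'_def using lpos Lp by (simp add: less_imp_le)
        have cond: "(\<forall>k. 0 \<le> l'$k) \<and> (\<forall>k. l'$k \<le> 1) \<and> (\<exists>i. l'$i = 1 \<and> (\<exists>j. j \<noteq> i \<and> \<delta>1 \<le> l'$j))"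
        proof -
          have a1: "\<forall>k. l'$k \<le> 1" unfolding l'_def using leL Lp by simp
          have a2: "l'$i0 = 1" unfolding l'_def using li0 Lp by simp
          have a3: "\<delta>1 \<le> l'$j" unfolding l'_def using lj l Lp L_def by (simp add: le_divide_eq mult.commute)
          show ?thesis using l'nn a1 a2 a3 ji by blast
        qed
        have vs: "vpowr l D = (L powr D) *\<^sub>R vpowr l' D" unfolding ll' using Lp l'nn by (rule scale_vpowr)
        define x where "x = A *v vpowr l' D"
        have Av: "A *v vpowr l D = (L powr D) *\<^sub>R x" unfolding vs x_def by (simp add: matrix_vector_mult_scaleR)
        have LHS: "(\<Sum>i\<in>UNIV. (l $ i) powr p * ((A *v vpowr l D) $ i)\<^sup>2)
            = L powr p * (L powr D)\<^sup>2 * (\<Sum>i\<in>UNIV. (l' $ i) powr p * (x $ i)\<^sup>2)"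
          unfolding Av sum_distrib_left
          by (rule sum.cong) (use Lp l'nn in \<open>auto simp: ll' powr_mult power_mult_distrib\<close>)
        have RHS: "(norm (A *v vpowr l D))\<^sup>2 = (L powr D)\<^sup>2 * (norm x)\<^sup>2"
          unfolding Av by (simp add: power_mult_distrib)
        have "C1 * (norm x)\<^sup>2 \<le> (\<Sum>i\<in>UNIV. (l' $ i) powr p * (x $ i)\<^sup>2)" using C1[OF cond] unfolding x_def .
        then have "L powr p * (L powr D)\<^sup>2 * (C1 * (norm x)\<^sup>2) \<le> L powr p * (L powr D)\<^sup>2 * (\<Sum>i\<in>UNIV. (l' $ i) powr p * (x $ i)\<^sup>2)"
          by (intro mult_left_mono) auto
        then show ?thesis unfolding p_def[symmetric] L_def[symmetric] LHS RHS by (simp add: algebra_simps)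
      qed
    qed
  qed
  show ?thesis by (rule conjI[OF P1 conjI[OF P2 conjI[OF P3 P4]]])
qed

end
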